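(* Let $m\in\mathbb N$. For any $\varepsilon>0$ there exists $\delta>0$ such that for any $n>m$, any $\zeta\in\mathrm{Mat}(m,\mathbb C)$ and any $z\in\mathrm{Mat}(\mathbb N,\mathbb C)$ satisfying $$\operatorname{tr}(\zeta^*\zeta)\,\operatorname{tr}\big((\pi^\infty_n(z))^*\pi^\infty_n(z)\big)<\delta n^2$$ we have $|1-(\mathcal A_n\Xi_\zeta)(z)|<\varepsilon$.
   Context: $\mathrm{Mat}(\mathbb N,\mathbb C)$ is the space of infinite complex matrices $z=(z_{ij})_{i,j\in\mathbb N}$, and $\pi^\infty_n(z)\in\mathrm{Mat}(n,\mathbb C)$ is its upper-left $n\times n$ corner. The unitary group $U(n)$ is embedded in $U(\infty)$ as acting on the first $n$ coordinates, so $u_1zu_2^{-1}$ makes sense for $u_1,u_2\in U(n)$, $z\in\mathrm{Mat}(\mathbb N,\mathbb C)$. For a function $f$ on $\mathrm{Mat}(\mathbb N,\mathbb C)$, $(\mathcal A_nf)(z)=\int_{U(n)\times U(n)}f(u_1zu_2^{-1})\,du_1\,du_2$, with $du$ the normalized Haar measure. For $\zeta\in\mathrm{Mat}(m,\mathbb C)$ set $\langle\zeta,z\rangle=\operatorname{Re}\operatorname{tr}(\zeta^*\pi^\infty_m(z))$ and $\Xi_\zeta(z)=\exp(i\langle\zeta,z\rangle)$. *)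

theory Defs
  imports "HOL-Analysis.Analysis" "HOL-Probability.Probability"
begin

text \<open>Infinite complex matrices indexed by nat (rows/columns 0,1,2,...).
  Finite n x n matrices are represented by the same type; only the entries
  with indices < n are relevant.\<close>
type_synonym cmat = "nat \<Rightarrow> nat \<Rightarrow> complex"

text \<open>Elements of U(n), embedded in U(infinity): identity outside the upper-left n x n block.\<close>
definition unitary_grp :: "nat \<Rightarrow> cmat set" where
  "unitary_grp n = {u. (\<forall>i j. (n \<le> i \<or> n \<le> j) \<longrightarrow> u i j = (if i = j then 1 else 0)) \<and>
      (\<forall>i<n. \<forall>j<n. (\<Sum>k<n. u i k * cnj (u j k)) = (if i = j then 1 else 0))}"

text \<open>Infinite matrix product (well defined when the left factor is in some embedded U(n)).\<close>
definition mat_mult_left :: "nat \<Rightarrow> cmat \<Rightarrow> cmat \<Rightarrow> cmat" where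
  "mat_mult_left n u z = (\<lambda>i j. if i < n then (\<Sum>k<n. u i k * z k j) else z i j)"

text \<open>Product z * v^{-1} = z * v^* for v in embedded U(n).\<close>
definition mat_mult_right_inv :: "nat \<Rightarrow> cmat \<Rightarrow> cmat \<Rightarrow> cmat" where
  "mat_mult_right_inv n z v = (\<lambda>i j. if j < n then (\<Sum>k<n. z i k * cnj (v j k)) else z i j)"

text \<open>Normalized Haar measure on U(n): a left invariant Borel probability measure on U(n)
  (unique by the Haar theorem for compact groups).\<close>
definition is_haar_U :: "nat \<Rightarrow> cmat measure \<Rightarrow> bool" where
  "is_haar_U n \<mu> \<longleftrightarrow> prob_space \<mu> \<and>
      space \<mu> = unitary_grp n \<and> sets \<mu> = sets (restrict_space borel (unitary_grp n)) \<and>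
      (\<forall>g\<in>unitary_grp n. distr \<mu> \<mu> (mat_mult_left n g) = \<mu>)"

definition avg_op :: "nat \<Rightarrow> cmat measure \<Rightarrow> (cmat \<Rightarrow> complex) \<Rightarrow> cmat \<Rightarrow> complex" where
  "avg_op n \<mu> f z = (\<integral>p. f (mat_mult_right_inv n (mat_mult_left n (fst p) z) (snd p)) \<partial>(\<mu> \<Otimes>\<^sub>M \<mu>))"

definition tr_adj :: "nat \<Rightarrow> cmat \<Rightarrow> cmat \<Rightarrow> complex" where
  "tr_adj n a b = (\<Sum>i<n. \<Sum>j<n. cnj (a i j) * b i j)"

definition Xi :: "nat \<Rightarrow> cmat \<Rightarrow> cmat \<Rightarrow> complex" where
  "Xi m \<zeta> z = exp (\<i> * complex_of_real (Re (tr_adj m \<zeta> z)))"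

end

theory Submission
  imports Defs "Jordan_Normal_Form.Determinant"
begin

lemma col_orth:
  assumes u: "u \<in> unitary_grp n" and k: "k < n" and k': "k' < n"
  shows "(\<Sum>i<n. cnj (u i k) * u i k') = (if k = k' then 1 else 0)"
proof -
  define A :: "complex mat" where "A = mat n n (\<lambda>(i,j). u i j)"
  define B :: "complex mat" where "B = mat n n (\<lambda>(i,j). cnj (u j i))"
  have A: "A \<in> carrier_mat n n" and B: "B \<in> carrier_mat n n" by (auto simp: A_def B_def)
  have "A * B = 1\<^sub>m n"
  proof (rule eq_matI)
    fix i j assume ij: "i < dim_row (1\<^sub>m n)" "j < dim_col (1\<^sub>m n)"
    have "(A * B) $$ (i,j) = (\<Sum>k<n. u i k * cnj (u j k))"
      using ij by (simp add: A_def B_def scalar_prod_def lessThan_atLeast0 row_def col_def)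
    also have "\<dots> = (if i = j then 1 else 0)" using u ij by (auto simp: unitary_grp_def)
    finally show "(A * B) $$ (i,j) = 1\<^sub>m n $$ (i,j)" using ij by simp
  qed (auto simp: A_def B_def)
  then have BA: "B * A = 1\<^sub>m n" by (rule mat_mult_left_right_inverse[OF A B])
  have "(B * A) $$ (k,k') = (\<Sum>i<n. cnj (u i k) * u i k')"
    using k k' by (simp add: A_def B_def scalar_prod_def lessThan_atLeast0 row_def col_def)
  then show ?thesis using BA k k' by simp
qed

lemma entry_bound:
  assumes u: "u \<in> unitary_grp n"
  shows "cmod (u i j) \<le> 1"
proof (cases "i < n \<and> j < n")
  case True
  have "(\<Sum>k<n. u i k * cnj (u i k)) = 1" using u True by (auto simp: unitary_grp_def)
  hence "(\<Sum>k<n. (cmod (u i k))^2) = 1"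
    by (metis (mono_tags, lifting) complex_norm_square of_real_eq_1_iff of_real_sum sum.cong)
  moreover have "(cmod (u i j))^2 \<le> (\<Sum>k<n. (cmod (u i k))^2)"
    using True by (intro member_le_sum) auto
  ultimately have "(cmod (u i j))^2 \<le> 1" by simp
  thus ?thesis using power2_le_imp_le[of "cmod (u i j)" 1] by simp
next
  case False
  then show ?thesis using u by (auto simp: unitary_grp_def)
qed

lemma cont_comp: "continuous_on UNIV (\<lambda>u::cmat. u i j)"
proof -
  have "continuous_on UNIV ((\<lambda>v::nat\<Rightarrow>complex. v j) \<circ> (\<lambda>u::cmat. u i))"
    by (rule continuous_on_compose) (auto intro: continuous_on_subset[OF continuous_on_product_coordinates])
  thus ?thesis by (simp add: o_def)
qed

definition sw :: "nat \<Rightarrow> nat \<Rightarrow> nat \<Rightarrow> nat" where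
  "sw a b i = (if i = a then b else if i = b then a else i)"

definition tmat :: "nat \<Rightarrow> nat \<Rightarrow> cmat" where
  "tmat a b = (\<lambda>i j. if sw a b i = j then 1 else 0)"

lemma sw_lt: "a < n \<Longrightarrow> b < n \<Longrightarrow> i < n \<Longrightarrow> sw a b i < n"
  by (auto simp: sw_def)
lemma sw_inj: "sw a b i = sw a b j \<longleftrightarrow> i = j"
  by (auto simp: sw_def)
lemma sw_ge: "a < n \<Longrightarrow> b < n \<Longrightarrow> n \<le> i \<Longrightarrow> sw a b i = i"
  by (auto simp: sw_def)

lemma tmat_unitary: assumes ab: "a < n" "b < n" shows "tmat a b \<in> unitary_grp n"
proof -
  have 1: "tmat a b i j = (if i = j then 1 else 0)" if "n \<le> i \<or> n \<le> j" for i j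
  proof (cases "n \<le> i")
    case True then show ?thesis using sw_ge[OF ab True] by (simp add: tmat_def)
  next
    case False
    then have "n \<le> j" "i < n" using that by auto
    then show ?thesis using sw_lt[OF ab \<open>i < n\<close>] by (auto simp: tmat_def)
  qed
  have 2: "(\<Sum>k<n. tmat a b i k * cnj (tmat a b j k)) = (if i = j then 1 else 0)" if "i < n" "j < n" for i j
  proof -
    have "(\<Sum>k<n. tmat a b i k * cnj (tmat a b j k)) = (\<Sum>k<n. if k = sw a b i then (if sw a b j = sw a b i then 1 else 0) else 0)"
      by (rule sum.cong) (auto simp: tmat_def)
    also have "\<dots> = (if sw a b j = sw a b i then 1 else 0)"
      using sw_lt[OF ab \<open>i < n\<close>] by (simp add: sum.delta)
    finally show ?thesis by (simp add: sw_inj eq_commute)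
  qed
  show ?thesis unfolding unitary_grp_def using 1 2 by blast
qed

lemma tmat_mult: assumes ab: "a < n" "b < n"
  shows "mat_mult_left n (tmat a b) u = (\<lambda>i j. u (sw a b i) j)"
proof (intro ext)
  fix i j
  show "mat_mult_left n (tmat a b) u i j = u (sw a b i) j"
  proof (cases "i < n")
    case True
    have "(\<Sum>k<n. tmat a b i k * u k j) = (\<Sum>k<n. if k = sw a b i then u (sw a b i) j else 0)"
      by (rule sum.cong) (auto simp: tmat_def)
    also have "\<dots> = u (sw a b i) j" using sw_lt[OF ab True] by (simp add: sum.delta)
    finally show ?thesis using True by (simp add: mat_mult_left_def)
  next
    case False
    then show ?thesis using sw_ge[OF ab] by (simp add: mat_mult_left_def)
  qed
qed

lemma sw_unitary: assumes ab: "a < n" "b < n" and u: "u \<in> unitary_grp n"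
  shows "(\<lambda>i j. u (sw a b i) j) \<in> unitary_grp n"
proof -
  have U1: "u i j = (if i = j then 1 else 0)" if "n \<le> i \<or> n \<le> j" for i j
    using u that by (auto simp: unitary_grp_def)
  have U2: "(\<Sum>k<n. u i k * cnj (u j k)) = (if i = j then 1 else 0)" if "i < n" "j < n" for i j
    using u that by (auto simp: unitary_grp_def)
  have 1: "u (sw a b i) j = (if i = j then 1 else 0)" if "n \<le> i \<or> n \<le> j" for i j
  proof (cases "n \<le> i")
    case True then show ?thesis using sw_ge[OF ab True] U1[of i j] by simp
  next
    case False
    then have "n \<le> j" "i < n" using that by auto
    then show ?thesis using sw_lt[OF ab \<open>i < n\<close>] U1[of "sw a b i" j] by auto
  qed
  have 2: "(\<Sum>k<n. u (sw a b i) k * cnj (u (sw a b j) k)) = (if i = j then 1 else 0)" if "i < n" "j < n" for i j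
    using U2[OF sw_lt[OF ab that(1)] sw_lt[OF ab that(2)]] by (simp add: sw_inj)
  show ?thesis unfolding unitary_grp_def using 1 2 by blast
qed

lemma row_iso:
  assumes u: "u \<in> unitary_grp n"
  shows "(\<Sum>i<n. (cmod (\<Sum>k<n. u i k * y k))^2) = (\<Sum>k<n. (cmod (y k))^2)"
proof -
  have "complex_of_real (\<Sum>i<n. (cmod (\<Sum>k<n. u i k * y k))^2)
      = (\<Sum>i<n. \<Sum>k'<n. \<Sum>k<n. y k * (cnj (y k') * (u i k * cnj (u i k'))))"
    unfolding of_real_sum complex_norm_square
    by (simp add: sum_distrib_left sum_distrib_right algebra_simps)
  also have "\<dots> = (\<Sum>k'<n. \<Sum>i<n. \<Sum>k<n. y k * (cnj (y k') * (u i k * cnj (u i k'))))"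
    by (rule sum.swap)
  also have "\<dots> = (\<Sum>k'<n. \<Sum>k<n. \<Sum>i<n. y k * (cnj (y k') * (u i k * cnj (u i k'))))"
    by (rule sum.cong[OF refl], rule sum.swap)
  also have "\<dots> = (\<Sum>k'<n. \<Sum>k<n. y k * cnj (y k') * (\<Sum>i<n. cnj (u i k') * u i k))"
    by (intro sum.cong refl) (simp add: sum_distrib_left mult_ac)
  also have "\<dots> = (\<Sum>k'<n. \<Sum>k<n. if k' = k then y k * cnj (y k) else 0)"
    by (intro sum.cong refl) (simp add: col_orth[OF u])
  also have "\<dots> = complex_of_real (\<Sum>k<n. (cmod (y k))^2)"
    unfolding of_real_sum complex_norm_square by simp
  finally show ?thesis by (simp only: of_real_eq_iff)
qed

lemma row_bound:
  assumes u: "u \<in> unitary_grp n"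
  shows "cmod (\<Sum>k<n. u i k * y k) \<le> (\<Sum>k<n. cmod (y k))"
proof -
  have "cmod (\<Sum>k<n. u i k * y k) \<le> (\<Sum>k<n. cmod (u i k * y k))" by (rule norm_sum)
  also have "\<dots> \<le> (\<Sum>k<n. cmod (y k))"
    by (intro sum_mono) (simp add: norm_mult mult_left_le_one_le entry_bound[OF u])
  finally show ?thesis .
qed

lemma borel_measurable_cnj'[measurable (raw)]:
  "f \<in> borel_measurable M \<Longrightarrow> (\<lambda>x. cnj (f x :: complex)) \<in> borel_measurable M"
  by (rule measurable_compose[OF _ borel_measurable_continuous_onI]) (auto intro: continuous_intros)

lemma borel_measurable_cexp'[measurable (raw)]:
  "f \<in> borel_measurable M \<Longrightarrow> (\<lambda>x. exp (f x :: complex)) \<in> borel_measurable M"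
  by (rule measurable_compose[OF _ borel_measurable_continuous_onI]) (auto intro: continuous_intros)

lemma tr_adj_self: "Re (tr_adj k a a) = (\<Sum>i<k. \<Sum>j<k. (cmod (a i j))^2)"
proof -
  have e: "Re (cnj x * x) = (cmod x)^2" for x
    by (metis complex_norm_square mult.commute Re_complex_of_real)
  show ?thesis unfolding tr_adj_def by (simp only: Re_sum e)
qed

lemma cs2:
  fixes a b :: "nat \<Rightarrow> nat \<Rightarrow> real"
  shows "(\<Sum>i<m. \<Sum>j<m. a i j * b i j)^2 \<le> (\<Sum>i<m. \<Sum>j<m. (a i j)^2) * (\<Sum>i<m. \<Sum>j<m. (b i j)^2)"
proof -
  have "(\<Sum>x\<in>{..<m}\<times>{..<m}. (case x of (i,j) \<Rightarrow> a i j) * (case x of (i,j) \<Rightarrow> b i j))^2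
     \<le> (\<Sum>x\<in>{..<m}\<times>{..<m}. (case x of (i,j) \<Rightarrow> a i j)^2) * (\<Sum>x\<in>{..<m}\<times>{..<m}. (case x of (i,j) \<Rightarrow> b i j)^2)"
    by (rule Cauchy_Schwarz_ineq_sum)
  then show ?thesis unfolding sum.cartesian_product by (simp add: case_prod_unfold)
qed

lemma iexp_bound: "cmod (1 - iexp x) \<le> \<bar>x\<bar>"
proof -
  have "cmod (iexp x - (\<Sum>k \<le> 0. (\<i> * x)^k / fact k)) \<le> \<bar>x\<bar>^(Suc 0) / fact (Suc 0)"
    by (rule iexp_approx1)
  then show ?thesis by (simp add: norm_minus_commute)
qed

lemma amgm_eps: "(e::real) > 0 \<Longrightarrow> \<bar>x\<bar> \<le> (e^2 + x^2) / (2*e)"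
proof -
  assume e: "e > 0"
  have "0 \<le> (\<bar>x\<bar> - e)^2" by simp
  hence "2 * e * \<bar>x\<bar> \<le> e^2 + x^2" by (simp add: power2_eq_square algebra_simps)
  thus ?thesis using e by (simp add: field_simps)
qed

context
  fixes n :: nat and \<mu> :: "cmat measure"
  assumes haar: "is_haar_U n \<mu>"
begin

lemma P: "prob_space \<mu>" using haar by (simp add: is_haar_U_def)
lemma sp: "space \<mu> = unitary_grp n" using haar by (simp add: is_haar_U_def)
lemma sets_eq: "sets \<mu> = sets (restrict_space borel (unitary_grp n))" using haar by (simp add: is_haar_U_def)

lemma comp_meas[measurable]: "(\<lambda>u. u i j) \<in> borel_measurable \<mu>"
  by (subst measurable_cong_sets[OF sets_eq refl])
     (intro measurable_restrict_space1 borel_measurable_continuous_onI cont_comp)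

lemma swap_inv:
  fixes f :: "cmat \<Rightarrow> real"
  assumes ab: "a < n" "b < n" and f: "f \<in> borel_measurable \<mu>"
  shows "integral\<^sup>L \<mu> (\<lambda>u. f (\<lambda>i j. u (sw a b i) j)) = integral\<^sup>L \<mu> f"
proof -
  let ?h = "mat_mult_left n (tmat a b)"
  have d: "distr \<mu> \<mu> ?h = \<mu>" using haar tmat_unitary[OF ab] by (simp add: is_haar_U_def)
  have heq: "?h = (\<lambda>u i j. u (sw a b i) j)" using tmat_mult[OF ab] by auto
  have cont: "continuous_on UNIV (\<lambda>u::cmat. \<lambda>i j. u (sw a b i) j)"
    by (intro continuous_on_coordinatewise_then_product cont_comp)
  have hm: "?h \<in> measurable \<mu> \<mu>"
    unfolding heq
    apply (subst measurable_cong_sets[OF sets_eq sets_eq])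
    apply (rule measurable_restrict_space2)
     apply (auto simp: space_restrict_space sw_unitary[OF ab])[1]
    apply (intro measurable_restrict_space1 borel_measurable_continuous_onI cont)
    done
  have "integral\<^sup>L \<mu> f = integral\<^sup>L (distr \<mu> \<mu> ?h) f" by (simp add: d)
  also have "\<dots> = integral\<^sup>L \<mu> (\<lambda>u. f (?h u))" by (rule integral_distr[OF hm f])
  finally show ?thesis by (simp add: heq)
qed

lemma row_moment:
  assumes i: "i < n"
  shows "integral\<^sup>L \<mu> (\<lambda>u. (cmod (\<Sum>k<n. u i k * y k))^2) = (\<Sum>k<n. (cmod (y k))^2) / n"
proof -
  interpret prob_space \<mu> by (rule P)
  define q where "q i = integral\<^sup>L \<mu> (\<lambda>u. (cmod (\<Sum>k<n. u i k * y k))^2)" for i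
  have int: "integrable \<mu> (\<lambda>u. (cmod (\<Sum>k<n. u i k * y k))^2)" for i
  proof (rule integrable_const_bound[where B="(\<Sum>k<n. cmod (y k))^2"])
    show "AE u in \<mu>. norm ((cmod (\<Sum>k<n. u i k * y k))^2) \<le> (\<Sum>k<n. cmod (y k))^2"
      by (rule AE_I2) (auto simp: sp intro!: power_mono row_bound)
  qed measurable
  have q0: "q a = q 0" if a: "a < n" for a
  proof -
    have "q 0 = integral\<^sup>L \<mu> (\<lambda>u. (\<lambda>v. (cmod (\<Sum>k<n. v 0 k * y k))^2) (\<lambda>i j. u (sw a 0 i) j))"
      unfolding q_def by (rule swap_inv[OF a, of 0, symmetric]) (use a in auto)
    also have "\<dots> = q a" by (simp add: q_def sw_def)
    finally show ?thesis by simp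
  qed
  have "(\<Sum>i<n. q i) = integral\<^sup>L \<mu> (\<lambda>u. \<Sum>i<n. (cmod (\<Sum>k<n. u i k * y k))^2)"
    unfolding q_def using int by simp
  also have "\<dots> = integral\<^sup>L \<mu> (\<lambda>u. \<Sum>k<n. (cmod (y k))^2)"
    by (intro Bochner_Integration.integral_cong refl) (auto simp: sp row_iso)
  also have "\<dots> = (\<Sum>k<n. (cmod (y k))^2)" using prob_space by simp
  finally have "(\<Sum>i<n. q i) = (\<Sum>k<n. (cmod (y k))^2)" .
  moreover have "(\<Sum>i<n. q i) = (\<Sum>i<n. q 0)" by (rule sum.cong) (auto intro: q0)
  hence "(\<Sum>i<n. q i) = n * q 0" by simp
  ultimately have "n * q 0 = (\<Sum>k<n. (cmod (y k))^2)" by simp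
  moreover have "q i = q 0" using q0[OF i] .
  ultimately show ?thesis using i unfolding q_def[symmetric] by (simp add: field_simps)
qed


lemma fst_meas[measurable]: "(\<lambda>p. fst p i k) \<in> borel_measurable (\<mu> \<Otimes>\<^sub>M \<mu>)"
  by measurable
lemma snd_meas[measurable]: "(\<lambda>p. snd p i k) \<in> borel_measurable (\<mu> \<Otimes>\<^sub>M \<mu>)"
  by measurable

lemma row_int:
  "integrable \<mu> (\<lambda>u. (cmod (\<Sum>k<n. u i k * y k))^2)"
proof -
  interpret prob_space \<mu> by (rule P)
  show ?thesis
  proof (rule integrable_const_bound[where B="(\<Sum>k<n. cmod (y k))^2"])
    show "AE u in \<mu>. norm ((cmod (\<Sum>k<n. u i k * y k))^2) \<le> (\<Sum>k<n. cmod (y k))^2"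
      by (rule AE_I2) (auto simp: sp intro!: power_mono row_bound)
  qed measurable
qed

lemma pair_int:
  "integrable (\<mu> \<Otimes>\<^sub>M \<mu>) (\<lambda>p. (cmod (\<Sum>l<n. (\<Sum>k<n. fst p i k * z k l) * cnj (snd p j l)))^2)"
proof -
  interpret PM: prob_space "\<mu> \<Otimes>\<^sub>M \<mu>" by (rule prob_space_pair[OF P P])
  have bnd: "cmod (\<Sum>l<n. (\<Sum>k<n. x i k * z k l) * cnj (y j l)) \<le> (\<Sum>l<n. \<Sum>k<n. cmod (z k l))"
    if x: "x \<in> unitary_grp n" and y: "y \<in> unitary_grp n" for x y
  proof -
    have "cmod (\<Sum>l<n. (\<Sum>k<n. x i k * z k l) * cnj (y j l)) \<le> (\<Sum>l<n. cmod ((\<Sum>k<n. x i k * z k l) * cnj (y j l)))"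
      by (rule norm_sum)
    also have "\<dots> \<le> (\<Sum>l<n. \<Sum>k<n. cmod (z k l))"
    proof (rule sum_mono)
      fix l
      have "cmod ((\<Sum>k<n. x i k * z k l) * cnj (y j l)) \<le> cmod (\<Sum>k<n. x i k * z k l)"
        by (simp add: norm_mult mult_left_le_one_le entry_bound[OF y] mult_left_le)
      also have "\<dots> \<le> (\<Sum>k<n. cmod (z k l))" by (rule row_bound[OF x])
      finally show "cmod ((\<Sum>k<n. x i k * z k l) * cnj (y j l)) \<le> (\<Sum>k<n. cmod (z k l))" .
    qed
    finally show ?thesis .
  qed
  have int: "integrable (\<mu> \<Otimes>\<^sub>M \<mu>) (\<lambda>p. (cmod (\<Sum>l<n. (\<Sum>k<n. fst p i k * z k l) * cnj (snd p j l)))^2)"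
  proof (rule PM.integrable_const_bound[where B="(\<Sum>l<n. \<Sum>k<n. cmod (z k l))^2"])
    show "AE p in \<mu> \<Otimes>\<^sub>M \<mu>. norm ((cmod (\<Sum>l<n. (\<Sum>k<n. fst p i k * z k l) * cnj (snd p j l)))^2) \<le> (\<Sum>l<n. \<Sum>k<n. cmod (z k l))^2"
      by (rule AE_I2) (auto simp: space_pair_measure sp intro!: power_mono bnd)
  qed measurable
  show ?thesis by (rule int)
qed

lemma pair_moment:
  assumes i: "i < n" and j: "j < n"
  shows "integral\<^sup>L (\<mu> \<Otimes>\<^sub>M \<mu>) (\<lambda>p. (cmod (\<Sum>l<n. (\<Sum>k<n. fst p i k * z k l) * cnj (snd p j l)))^2)
     = (\<Sum>l<n. \<Sum>k<n. (cmod (z k l))^2) / (real n)^2"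
proof -
  interpret P1: prob_space \<mu> by (rule P)
  interpret PP: pair_sigma_finite \<mu> \<mu>
    by (simp add: pair_sigma_finite_def P1.sigma_finite_measure_axioms)
  interpret PM: prob_space "\<mu> \<Otimes>\<^sub>M \<mu>" by (rule prob_space_pair[OF P P])
  define A where "A x l = (\<Sum>k<n. x i k * z k l)" for x :: cmat and l
  have bnd: "cmod (\<Sum>l<n. (\<Sum>k<n. x i k * z k l) * cnj (y j l)) \<le> (\<Sum>l<n. \<Sum>k<n. cmod (z k l))"
    if x: "x \<in> unitary_grp n" and y: "y \<in> unitary_grp n" for x y
  proof -
    have "cmod (\<Sum>l<n. (\<Sum>k<n. x i k * z k l) * cnj (y j l)) \<le> (\<Sum>l<n. cmod ((\<Sum>k<n. x i k * z k l) * cnj (y j l)))"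
      by (rule norm_sum)
    also have "\<dots> \<le> (\<Sum>l<n. \<Sum>k<n. cmod (z k l))"
    proof (rule sum_mono)
      fix l
      have "cmod ((\<Sum>k<n. x i k * z k l) * cnj (y j l)) \<le> cmod (\<Sum>k<n. x i k * z k l)"
        by (simp add: norm_mult mult_left_le_one_le entry_bound[OF y] mult_left_le)
      also have "\<dots> \<le> (\<Sum>k<n. cmod (z k l))" by (rule row_bound[OF x])
      finally show "cmod ((\<Sum>k<n. x i k * z k l) * cnj (y j l)) \<le> (\<Sum>k<n. cmod (z k l))" .
    qed
    finally show ?thesis .
  qed
  have int: "integrable (\<mu> \<Otimes>\<^sub>M \<mu>) (\<lambda>p. (cmod (\<Sum>l<n. (\<Sum>k<n. fst p i k * z k l) * cnj (snd p j l)))^2)"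
  proof (rule PM.integrable_const_bound[where B="(\<Sum>l<n. \<Sum>k<n. cmod (z k l))^2"])
    show "AE p in \<mu> \<Otimes>\<^sub>M \<mu>. norm ((cmod (\<Sum>l<n. (\<Sum>k<n. fst p i k * z k l) * cnj (snd p j l)))^2) \<le> (\<Sum>l<n. \<Sum>k<n. cmod (z k l))^2"
      by (rule AE_I2) (auto simp: space_pair_measure sp intro!: power_mono bnd)
  qed measurable
  have inner: "(\<integral>y. (cmod (\<Sum>l<n. (\<Sum>k<n. x i k * z k l) * cnj (y j l)))^2 \<partial>\<mu>) = (\<Sum>l<n. (cmod (A x l))^2) / n" for x
  proof -
    have "(\<integral>y. (cmod (\<Sum>l<n. (\<Sum>k<n. x i k * z k l) * cnj (y j l)))^2 \<partial>\<mu>)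
        = (\<integral>y. (cmod (\<Sum>l<n. y j l * cnj (A x l)))^2 \<partial>\<mu>)"
    proof (intro Bochner_Integration.integral_cong refl)
      fix y
      have "(\<Sum>l<n. (\<Sum>k<n. x i k * z k l) * cnj (y j l)) = cnj (\<Sum>l<n. y j l * cnj (A x l))"
        by (simp add: A_def mult.commute)
      then show "(cmod (\<Sum>l<n. (\<Sum>k<n. x i k * z k l) * cnj (y j l)))^2 = (cmod (\<Sum>l<n. y j l * cnj (A x l)))^2"
        by (simp only: complex_mod_cnj)
    qed
    also have "\<dots> = (\<Sum>l<n. (cmod (cnj (A x l)))^2) / n" by (rule row_moment[OF j])
    finally show ?thesis by simp
  qed
  have "integral\<^sup>L (\<mu> \<Otimes>\<^sub>M \<mu>) (\<lambda>p. (cmod (\<Sum>l<n. (\<Sum>k<n. fst p i k * z k l) * cnj (snd p j l)))^2)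
     = (\<integral>x. (\<integral>y. (cmod (\<Sum>l<n. (\<Sum>k<n. x i k * z k l) * cnj (y j l)))^2 \<partial>\<mu>) \<partial>\<mu>)"
    using PP.integral_fst'[OF int] by simp
  also have "\<dots> = (\<integral>x. (\<Sum>l<n. (cmod (A x l))^2) / n \<partial>\<mu>)"
    by (simp add: inner)
  also have "\<dots> = (\<Sum>l<n. (\<integral>x. (cmod (A x l))^2 \<partial>\<mu>)) / n"
    by (simp add: A_def row_int)
  also have "\<dots> = (\<Sum>l<n. (\<Sum>k<n. (cmod (z k l))^2) / n) / n"
    by (simp add: A_def row_moment[OF i] mult.commute)
  also have "\<dots> = (\<Sum>l<n. \<Sum>k<n. (cmod (z k l))^2) / (real n)^2"
    by (simp add: sum_divide_distrib power2_eq_square)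
  finally show ?thesis .
qed


lemma main_est:
  assumes mn: "m < n" and e: "e > 0"
  shows "cmod (1 - avg_op n \<mu> (Xi m \<zeta>) z)
     \<le> (e^2 + Re (tr_adj m \<zeta> \<zeta>) * ((real m)^2 * Re (tr_adj n z z) / (real n)^2)) / (2*e)"
proof -
  interpret P1: prob_space \<mu> by (rule P)
  interpret PM: prob_space "\<mu> \<Otimes>\<^sub>M \<mu>" by (rule prob_space_pair[OF P P])
  define wf where "wf i j p = (\<Sum>l<n. (\<Sum>k<n. fst p i k * z k l) * cnj (snd p j l))"
    for i j and p :: "cmat \<times> cmat"
  define X where "X p = Re (\<Sum>i<m. \<Sum>j<m. cnj (\<zeta> i j) * wf i j p)" for p
  define S where "S = Re (tr_adj m \<zeta> \<zeta>)"
  define Z where "Z = Re (tr_adj n z z)"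
  define G where "G p = (e^2 + S * (\<Sum>i<m. \<Sum>j<m. (cmod (wf i j p))^2)) / (2*e)" for p
  have S_eq: "S = (\<Sum>i<m. \<Sum>j<m. (cmod (\<zeta> i j))^2)" unfolding S_def by (rule tr_adj_self)
  have Z_eq: "Z = (\<Sum>l<n. \<Sum>k<n. (cmod (z k l))^2)" unfolding Z_def tr_adj_self by (rule sum.swap)
  have S0: "S \<ge> 0" by (simp add: S_eq sum_nonneg)
  have wf_meas[measurable]: "wf i j \<in> borel_measurable (\<mu> \<Otimes>\<^sub>M \<mu>)" for i j
    unfolding wf_def by measurable
  have X_meas[measurable]: "X \<in> borel_measurable (\<mu> \<Otimes>\<^sub>M \<mu>)" unfolding X_def by measurable
  have tr_eq: "tr_adj m \<zeta> (mat_mult_right_inv n (mat_mult_left n (fst p) z) (snd p))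
      = (\<Sum>i<m. \<Sum>j<m. cnj (\<zeta> i j) * wf i j p)" for p
    unfolding tr_adj_def using mn
    by (intro sum.cong refl) (auto simp: mat_mult_right_inv_def mat_mult_left_def wf_def)
  have avg: "avg_op n \<mu> (Xi m \<zeta>) z = (\<integral>p. iexp (X p) \<partial>(\<mu> \<Otimes>\<^sub>M \<mu>))"
    unfolding avg_op_def Xi_def X_def tr_eq ..
  have I1: "integrable (\<mu> \<Otimes>\<^sub>M \<mu>) (\<lambda>p. iexp (X p))"
    by (rule PM.integrable_const_bound[where B=1]) (rule AE_I2, simp, measurable)
  have I2: "integrable (\<mu> \<Otimes>\<^sub>M \<mu>) (\<lambda>p. cmod (1 - iexp (X p)))"
    using I1 by (intro integrable_norm integrable_diff) auto
  have Iw: "integrable (\<mu> \<Otimes>\<^sub>M \<mu>) (\<lambda>p. (cmod (wf i j p))^2)" for i j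
    unfolding wf_def by (rule pair_int)
  have IG: "integrable (\<mu> \<Otimes>\<^sub>M \<mu>) G"
    unfolding G_def using Iw by (intro integrable_divide integrable_add PM.integrable_const integrable_mult_right integrable_sum) auto
  have pt: "cmod (1 - iexp (X p)) \<le> G p" for p
  proof -
    have "\<bar>X p\<bar> \<le> cmod (\<Sum>i<m. \<Sum>j<m. cnj (\<zeta> i j) * wf i j p)"
      unfolding X_def by (rule abs_Re_le_cmod)
    also have "\<dots> \<le> (\<Sum>i<m. cmod (\<Sum>j<m. cnj (\<zeta> i j) * wf i j p))" by (rule norm_sum)
    also have "\<dots> \<le> (\<Sum>i<m. \<Sum>j<m. cmod (\<zeta> i j) * cmod (wf i j p))"
      by (rule sum_mono, rule order_trans[OF norm_sum], simp add: norm_mult)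
    finally have a: "\<bar>X p\<bar> \<le> (\<Sum>i<m. \<Sum>j<m. cmod (\<zeta> i j) * cmod (wf i j p))" .
    have "(X p)^2 = \<bar>X p\<bar>^2" by simp
    also have "\<dots> \<le> (\<Sum>i<m. \<Sum>j<m. cmod (\<zeta> i j) * cmod (wf i j p))^2"
      by (rule power_mono[OF a]) simp
    also have "\<dots> \<le> S * (\<Sum>i<m. \<Sum>j<m. (cmod (wf i j p))^2)"
      unfolding S_eq by (rule cs2)
    finally have b: "(X p)^2 \<le> S * (\<Sum>i<m. \<Sum>j<m. (cmod (wf i j p))^2)" .
    have "cmod (1 - iexp (X p)) \<le> \<bar>X p\<bar>" by (rule iexp_bound)
    also have "\<dots> \<le> (e^2 + (X p)^2) / (2*e)" by (rule amgm_eps[OF e])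
    also have "\<dots> \<le> G p" unfolding G_def using b e by (intro divide_right_mono) auto
    finally show ?thesis .
  qed
  have "1 - avg_op n \<mu> (Xi m \<zeta>) z = (\<integral>p. 1 - iexp (X p) \<partial>(\<mu> \<Otimes>\<^sub>M \<mu>))"
    unfolding avg using I1 by (simp add: PM.prob_space)
  hence "cmod (1 - avg_op n \<mu> (Xi m \<zeta>) z) \<le> (\<integral>p. cmod (1 - iexp (X p)) \<partial>(\<mu> \<Otimes>\<^sub>M \<mu>))"
    by (simp only: integral_norm_bound)
  also have "\<dots> \<le> integral\<^sup>L (\<mu> \<Otimes>\<^sub>M \<mu>) G"
    by (rule integral_mono[OF I2 IG pt])
  also have "\<dots> = (e^2 + S * (\<Sum>i<m. \<Sum>j<m. integral\<^sup>L (\<mu> \<Otimes>\<^sub>M \<mu>) (\<lambda>p. (cmod (wf i j p))^2))) / (2*e)"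
    unfolding G_def using Iw by (simp add: PM.prob_space)
  also have "(\<Sum>i<m. \<Sum>j<m. integral\<^sup>L (\<mu> \<Otimes>\<^sub>M \<mu>) (\<lambda>p. (cmod (wf i j p))^2)) = (real m)^2 * (Z / (real n)^2)"
  proof -
    have "(\<Sum>i<m. \<Sum>j<m. integral\<^sup>L (\<mu> \<Otimes>\<^sub>M \<mu>) (\<lambda>p. (cmod (wf i j p))^2)) = (\<Sum>i<m. \<Sum>j<m. Z / (real n)^2)"
      unfolding wf_def Z_eq using mn by (intro sum.cong refl) (auto intro: pair_moment)
    thus ?thesis by (simp add: power2_eq_square)
  qed
  finally show ?thesis unfolding S_def Z_def by (simp add: mult.assoc)
qed

end

theorem mainTheorem10:
  fixes m :: nat and \<epsilon> :: real
  assumes "\<epsilon> > 0"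
  shows "\<exists>\<delta>>0. \<forall>n>m. \<forall>\<zeta> z. \<forall>\<mu>. is_haar_U n \<mu> \<longrightarrow>
           Re (tr_adj m \<zeta> \<zeta>) * Re (tr_adj n z z) < \<delta> * real n ^ 2 \<longrightarrow>
           cmod (1 - avg_op n \<mu> (Xi m \<zeta>) z) < \<epsilon>"
proof (intro exI[of _ "\<epsilon>^2 / ((real m)^2 + 1)"] conjI allI impI)
  show "\<epsilon>^2 / ((real m)^2 + 1) > 0" using assms by (intro divide_pos_pos) (simp_all add: add_nonneg_pos)
next
  fix n \<zeta> z \<mu>
  assume mn: "m < n" and haar: "is_haar_U n \<mu>"
    and h: "Re (tr_adj m \<zeta> \<zeta>) * Re (tr_adj n z z) < \<epsilon>^2 / ((real m)^2 + 1) * real n ^ 2"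
  define S where "S = Re (tr_adj m \<zeta> \<zeta>)"
  define Z where "Z = Re (tr_adj n z z)"
  define d where "d = \<epsilon>^2 / ((real m)^2 + 1)"
  have n0: "real n > 0" using mn by simp
  have SZ: "S * Z / (real n)^2 < d" using h n0 unfolding S_def Z_def d_def by (simp add: field_simps)
  have "(real m)^2 * (S * Z / (real n)^2) \<le> (real m)^2 * d"
    using SZ by (intro mult_left_mono) auto
  also have "\<dots> < \<epsilon>^2"
  proof -
    have p: "0 < (real m)^2 + 1" by (rule add_nonneg_pos) simp_all
    have q: "(real m)^2 / ((real m)^2+1) < 1" using p by (simp add: divide_less_eq)
    have "(real m)^2 * d = \<epsilon>^2 * ((real m)^2 / ((real m)^2+1))" by (simp add: d_def)
    also have "\<dots> < \<epsilon>^2 * 1" using q assms by (intro mult_strict_left_mono) auto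
    finally show ?thesis by simp
  qed
  finally have key: "S * ((real m)^2 * Z / (real n)^2) < \<epsilon>^2" by (simp add: field_simps)
  have "cmod (1 - avg_op n \<mu> (Xi m \<zeta>) z) \<le> (\<epsilon>^2 + S * ((real m)^2 * Z / (real n)^2)) / (2*\<epsilon>)"
    unfolding S_def Z_def by (rule main_est[OF haar mn assms])
  also have "\<dots> < \<epsilon>" using key assms by (simp add: field_simps power2_eq_square)
  finally show "cmod (1 - avg_op n \<mu> (Xi m \<zeta>) z) < \<epsilon>" .
qed

end
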